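(* Over a field of characteristic $0$, write $[a,b]=ab-ba$ and $\{a,b\}=ab+ba$. An algebra is left-symmetric and satisfies $a(bc)+b(ac)+a(cb)+c(ab)+b(ca)+c(ba)=0$ if and only if, in terms of $[\cdot,\cdot]$ and $\{\cdot,\cdot\}$, it satisfies \[ [[a,b],c]+[[b,c],a]+[[c,a],b]=0, \] \[ \{\{a,b\},c\}=-\{[a,b],c\}-2\{[a,c],b\}+[\{a,b\},c]-[[a,c],b]+\{a,\{b,c\}\}-\{a,[b,c]\}+[a,\{b,c\}], \] and \[ \{a,\{b,c\}\}=\{[a,b],c\}+\{[a,c],b\}+[\{b,c\},a]+\tfrac23[[a,c],b]+\tfrac13[a,[b,c]]. \]
   Context: A left-symmetric algebra is an algebra whose associator $(a,b,c)=(ab)c-a(bc)$ satisfies $(a,b,c)=(b,a,c)$. The statement is the polarization (Markl–Remm) of this variety. *)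

theory Defs
  imports Main "HOL.Vector_Spaces"
begin

definition bilinear_product ::
  "('k::field \<Rightarrow> 'v::ab_group_add \<Rightarrow> 'v) \<Rightarrow> ('v \<Rightarrow> 'v \<Rightarrow> 'v) \<Rightarrow> bool" where
  "bilinear_product scale mult \<longleftrightarrow>
     (\<forall>x y z. mult (x + y) z = mult x z + mult y z) \<and>
     (\<forall>x y z. mult x (y + z) = mult x y + mult x z) \<and>
     (\<forall>c x y. mult (scale c x) y = scale c (mult x y)) \<and>
     (\<forall>c x y. mult x (scale c y) = scale c (mult x y))"

definition assoc_of :: "('v::ab_group_add \<Rightarrow> 'v \<Rightarrow> 'v) \<Rightarrow> 'v \<Rightarrow> 'v \<Rightarrow> 'v \<Rightarrow> 'v" where
  "assoc_of mult a b c = mult (mult a b) c - mult a (mult b c)"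

definition left_symmetric :: "('v::ab_group_add \<Rightarrow> 'v \<Rightarrow> 'v) \<Rightarrow> bool" where
  "left_symmetric mult \<longleftrightarrow> (\<forall>a b c. assoc_of mult a b c = assoc_of mult b a c)"

definition commutator :: "('v::ab_group_add \<Rightarrow> 'v \<Rightarrow> 'v) \<Rightarrow> 'v \<Rightarrow> 'v \<Rightarrow> 'v" where
  "commutator mult a b = mult a b - mult b a"

definition anticommutator :: "('v::ab_group_add \<Rightarrow> 'v \<Rightarrow> 'v) \<Rightarrow> 'v \<Rightarrow> 'v \<Rightarrow> 'v" where
  "anticommutator mult a b = mult a b + mult b a"

end

theory Submission
  imports Defs
begin

lemma bp_lemmas:
  assumes "bilinear_product scale mult"
  shows "mult (x - y) z = mult x z - mult y z"
    and "mult x (y - z) = mult x y - mult x z"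
    and "mult (x + y) z = mult x z + mult y z"
    and "mult x (y + z) = mult x y + mult x z"
    and "mult (- x) z = - mult x z"
    and "mult x (- z) = - mult x z"
proof -
  have A: "\<And>x y z. mult (x + y) z = mult x z + mult y z"
   and B: "\<And>x y z. mult x (y + z) = mult x y + mult x z"
    using assms unfolding bilinear_product_def by auto
  have A1: "mult (x - y) z = mult x z - mult y z" for x y z
    using A[of "x - y" y z] by (simp add: algebra_simps)
  have B1: "mult x (y - z) = mult x y - mult x z" for x y z
    using B[of x "y - z" z] by (simp add: algebra_simps)
  show "mult (x - y) z = mult x z - mult y z" by (rule A1)
  show "mult x (y - z) = mult x y - mult x z" by (rule B1)
  show "mult (x + y) z = mult x z + mult y z" by (rule A)
  show "mult x (y + z) = mult x y + mult x z" by (rule B)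
  show "mult (- x) z = - mult x z" using A1[of 0 x z] A1[of 0 0 z] by simp
  show "mult x (- z) = - mult x z" using B1[of x 0 z] B1[of x 0 0] by simp
qed

lemma vs_lemmas:
  fixes scale :: "'k::field_char_0 \<Rightarrow> 'v::ab_group_add \<Rightarrow> 'v"
  assumes "vector_space scale"
  shows "scale 2 y = y + y"
    and "x + x = 0 \<Longrightarrow> x = 0"
    and "x + x + x + x = 0 \<Longrightarrow> x = 0"
    and "(x = p + scale (2/3) q + scale (1/3) r) \<longleftrightarrow> (x + x + x = p + p + p + q + q + r)"
proof -
  interpret vector_space scale by (rule assms)
  have s3: "scale 3 y = y + y + y" for y
    using scale_left_distrib[of 2 1 y] scale_left_distrib[of 1 1 y] by simp
  show s2: "scale 2 y = y + y" for y
    using scale_left_distrib[of 1 1 y] by simp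
  show "x + x = 0 \<Longrightarrow> x = 0"
    using s2[of x] by (metis scale_eq_0_iff zero_neq_numeral)
  show "x + x + x + x = 0 \<Longrightarrow> x = 0"
  proof -
    assume "x + x + x + x = 0"
    then have "scale 4 x = 0" using scale_left_distrib[of 3 1 x] s3[of x] by simp
    then show "x = 0" by (metis scale_eq_0_iff zero_neq_numeral)
  qed
  have e: "(x = p + scale (2/3) q + scale (1/3) r) \<longleftrightarrow> (scale 3 x = scale 3 (p + scale (2/3) q + scale (1/3) r))"
    by (metis scale_cancel_left zero_neq_numeral)
  also have "scale 3 (p + scale (2/3) q + scale (1/3) r) = scale 3 p + scale 2 q + r"
    by (simp add: scale_right_distrib)
  finally show "(x = p + scale (2/3) q + scale (1/3) r) \<longleftrightarrow> (x + x + x = p + p + p + q + q + r)"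
    by (simp add: s3 s2 add.assoc)
qed

theorem mainTheorem15:
  fixes scale :: "'k::field_char_0 \<Rightarrow> 'v::ab_group_add \<Rightarrow> 'v"
    and mult :: "'v \<Rightarrow> 'v \<Rightarrow> 'v"
  assumes "vector_space scale"
    and "bilinear_product scale mult"
  defines "L \<equiv> commutator mult" and "J \<equiv> anticommutator mult"
  shows "(left_symmetric mult \<and>
          (\<forall>a b c. mult a (mult b c) + mult b (mult a c) + mult a (mult c b)
                  + mult c (mult a b) + mult b (mult c a) + mult c (mult b a) = 0))
     \<longleftrightarrow>
         ((\<forall>a b c. L (L a b) c + L (L b c) a + L (L c a) b = 0) \<and>
          (\<forall>a b c. J (J a b) c =
              - J (L a b) c - scale 2 (J (L a c) b) + L (J a b) c - L (L a c) b
              + J a (J b c) - J a (L b c) + L a (J b c)) \<and>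
          (\<forall>a b c. J a (J b c) =
              J (L a b) c + J (L a c) b + L (J b c) a
              + scale (2/3) (L (L a c) b) + scale (1/3) (L a (L b c))))"
proof -
  note M = bp_lemmas[OF assms(2)]
  note V = vs_lemmas[OF assms(1)]
  note EX = L_def J_def commutator_def anticommutator_def assoc_of_def M V(1)
  define LS where "LS a b c = assoc_of mult a b c - assoc_of mult b a c" for a b c
  define S6 where "S6 a b c = mult a (mult b c) + mult b (mult a c) + mult a (mult c b)
                  + mult c (mult a b) + mult b (mult c a) + mult c (mult b a)" for a b c
  define T1 where "T1 a b c = L (L a b) c + L (L b c) a + L (L c a) b" for a b c
  define T2 where "T2 a b c = J (J a b) c - (
              - J (L a b) c - scale 2 (J (L a c) b) + L (J a b) c - L (L a c) b
              + J a (J b c) - J a (L b c) + L a (J b c))" for a b c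
  define T3 where "T3 a b c = (J a (J b c) + J a (J b c) + J a (J b c)) -
     ((J (L a b) c + J (L a c) b + L (J b c) a) + (J (L a b) c + J (L a c) b + L (J b c) a)
      + (J (L a b) c + J (L a c) b + L (J b c) a) + L (L a c) b + L (L a c) b + L a (L b c))" for a b c
  have i1: "T1 a b c = LS a b c - LS a c b + LS b c a" for a b c
    unfolding T1_def LS_def by (simp add: EX algebra_simps)
  have i2: "T2 a b c = LS a b c + LS a c b + LS a c b + LS a c b + LS b c a" for a b c
    unfolding T2_def LS_def by (simp add: EX algebra_simps)
  have i3: "T3 a b c = - (LS a b c + LS a b c + LS a b c)
      - (LS a c b + LS a c b + LS a c b + LS a c b + LS a c b) + LS b c a + S6 a b c + S6 a b c" for a b c
    unfolding T3_def LS_def S6_def by (simp add: EX algebra_simps)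
  have j1: "LS a b c + LS a b c + LS a b c + LS a b c = T1 a b c + T2 a c b" for a b c
    unfolding T1_def T2_def LS_def by (simp add: EX algebra_simps)
  have j2: "S6 a b c + S6 a b c = - T1 a b c + T2 a b c + T2 a c b + T3 a b c" for a b c
    unfolding T1_def T2_def T3_def S6_def by (simp add: EX algebra_simps)
  have lsE: "left_symmetric mult \<longleftrightarrow> (\<forall>a b c. LS a b c = 0)"
    unfolding left_symmetric_def LS_def by simp
  have s6E: "(\<forall>a b c. mult a (mult b c) + mult b (mult a c) + mult a (mult c b)
                  + mult c (mult a b) + mult b (mult c a) + mult c (mult b a) = 0) \<longleftrightarrow> (\<forall>a b c. S6 a b c = 0)"
    unfolding S6_def by simp
  have t1E: "(\<forall>a b c. L (L a b) c + L (L b c) a + L (L c a) b = 0) \<longleftrightarrow> (\<forall>a b c. T1 a b c = 0)"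
    unfolding T1_def by simp
  have t2E: "(\<forall>a b c. J (J a b) c =
              - J (L a b) c - scale 2 (J (L a c) b) + L (J a b) c - L (L a c) b
              + J a (J b c) - J a (L b c) + L a (J b c)) \<longleftrightarrow> (\<forall>a b c. T2 a b c = 0)"
    unfolding T2_def by simp
  have t3E: "(\<forall>a b c. J a (J b c) =
              J (L a b) c + J (L a c) b + L (J b c) a
              + scale (2/3) (L (L a c) b) + scale (1/3) (L a (L b c))) \<longleftrightarrow> (\<forall>a b c. T3 a b c = 0)"
    unfolding T3_def V(4) by simp
  show ?thesis
    unfolding lsE s6E t1E t2E t3E
  proof
    assume H: "(\<forall>a b c. LS a b c = 0) \<and> (\<forall>a b c. S6 a b c = 0)"
    then show "(\<forall>a b c. T1 a b c = 0) \<and> (\<forall>a b c. T2 a b c = 0) \<and> (\<forall>a b c. T3 a b c = 0)"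
      using i1 i2 i3 by simp
  next
    assume H: "(\<forall>a b c. T1 a b c = 0) \<and> (\<forall>a b c. T2 a b c = 0) \<and> (\<forall>a b c. T3 a b c = 0)"
    have "LS a b c = 0" for a b c
      by (rule V(3)) (use H j1 in simp)
    moreover have "S6 a b c = 0" for a b c
      by (rule V(2)) (use H j2 in simp)
    ultimately show "(\<forall>a b c. LS a b c = 0) \<and> (\<forall>a b c. S6 a b c = 0)" by simp
  qed
qed

end
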